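(* Let $G$ be a graph of order $n$ with minimum degree $\delta(G)\geq\frac{n-1}{2}$. Then $prc(G)=\chi'(G)$.
   Context: A path in an edge-coloured graph is a rainbow path if its edges receive pairwise distinct colours. The proper rainbow connection number $prc(G)$ of a connected graph is the minimum number of colours in a proper edge-colouring (adjacent edges get distinct colours) such that every two distinct vertices are joined by a rainbow path. $\chi'(G)$ is the chromatic index. *)

theory Defs
  imports Main
begin

definition simple_graph :: "'a set \<Rightarrow> 'a set set \<Rightarrow> bool" where
  "simple_graph V E \<longleftrightarrow> finite V \<and> (\<forall>e\<in>E. e \<subseteq> V \<and> card e = 2)"

definition degree :: "'a set set \<Rightarrow> 'a \<Rightarrow> nat" where
  "degree E v = card {e\<in>E. v \<in> e}"

definition proper_edge_colouring :: "'a set set \<Rightarrow> ('a set \<Rightarrow> nat) \<Rightarrow> bool" where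
  "proper_edge_colouring E c \<longleftrightarrow>
     (\<forall>e\<in>E. \<forall>f\<in>E. e \<noteq> f \<and> e \<inter> f \<noteq> {} \<longrightarrow> c e \<noteq> c f)"

definition is_path :: "'a set set \<Rightarrow> 'a list \<Rightarrow> bool" where
  "is_path E xs \<longleftrightarrow> xs \<noteq> [] \<and> distinct xs \<and>
     (\<forall>i. Suc i < length xs \<longrightarrow> {xs ! i, xs ! Suc i} \<in> E)"

definition path_edges :: "'a list \<Rightarrow> 'a set list" where
  "path_edges xs = map (\<lambda>i. {xs ! i, xs ! Suc i}) [0..<length xs - 1]"

definition rainbow_path :: "'a set set \<Rightarrow> ('a set \<Rightarrow> nat) \<Rightarrow> 'a list \<Rightarrow> bool" where
  "rainbow_path E c xs \<longleftrightarrow> is_path E xs \<and> distinct (map c (path_edges xs))"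

definition rainbow_connected :: "'a set \<Rightarrow> 'a set set \<Rightarrow> ('a set \<Rightarrow> nat) \<Rightarrow> bool" where
  "rainbow_connected V E c \<longleftrightarrow>
     (\<forall>u\<in>V. \<forall>v\<in>V. u \<noteq> v \<longrightarrow>
        (\<exists>xs. rainbow_path E c xs \<and> hd xs = u \<and> last xs = v))"

definition chromatic_index :: "'a set set \<Rightarrow> nat" where
  "chromatic_index E = (LEAST k. \<exists>c. proper_edge_colouring E c \<and> card (c ` E) = k)"

definition prc :: "'a set \<Rightarrow> 'a set set \<Rightarrow> nat" where
  "prc V E = (LEAST k. \<exists>c. proper_edge_colouring E c \<and> rainbow_connected V E c
                             \<and> card (c ` E) = k)"

end

theory Submission
  imports Defs
begin

lemma deg_le_nbr:
  assumes "simple_graph V E" "u \<in> V"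
  shows "degree E u \<le> card {w\<in>V. {u,w} \<in> E}"
proof -
  have fin: "finite V" using assms unfolding simple_graph_def by auto
  have "{e\<in>E. u \<in> e} \<subseteq> (\<lambda>w. {u,w}) ` {w\<in>V. {u,w} \<in> E}"
  proof
    fix e assume e: "e \<in> {e\<in>E. u \<in> e}"
    then have "card e = 2" "e \<subseteq> V" using assms unfolding simple_graph_def by auto
    then obtain a b where ab: "e = {a,b}" "a \<noteq> b" by (meson card_2_iff)
    show "e \<in> (\<lambda>w. {u,w}) ` {w\<in>V. {u,w} \<in> E}"
    proof (cases "a = u")
      case True then show ?thesis using ab e \<open>e \<subseteq> V\<close> by auto
    next
      case False then have "b = u" using ab e by auto
      then have "e = {u,a}" using ab by auto
      then show ?thesis using e \<open>e \<subseteq> V\<close> by auto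
    qed
  qed
  then have "card {e\<in>E. u \<in> e} \<le> card ((\<lambda>w. {u,w}) ` {w\<in>V. {u,w} \<in> E})"
    using fin by (intro card_mono) auto
  also have "\<dots> \<le> card {w\<in>V. {u,w} \<in> E}" using fin by (intro card_image_le) auto
  finally show ?thesis unfolding degree_def .
qed

lemma common_nbr:
  assumes g: "simple_graph V E"
    and d: "\<forall>v\<in>V. 2 * int (degree E v) \<ge> int (card V) - 1"
    and u: "u \<in> V" and v: "v \<in> V" and uv: "u \<noteq> v" and ne: "{u,v} \<notin> E"
  shows "\<exists>w. {u,w} \<in> E \<and> {w,v} \<in> E"
proof (rule ccontr)
  assume nc: "\<not> ?thesis"
  have fin: "finite V" using g unfolding simple_graph_def by auto
  let ?A = "{w\<in>V. {u,w} \<in> E}" and ?B = "{w\<in>V. {v,w} \<in> E}"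
  have c2: "\<And>x y. {x,y} \<in> E \<Longrightarrow> x \<noteq> y"
    using g unfolding simple_graph_def by fastforce
  have sub: "?A \<union> ?B \<subseteq> V - {u,v}"
  proof
    fix w assume w: "w \<in> ?A \<union> ?B"
    have "{v,u} = {u,v}" by blast
    then show "w \<in> V - {u,v}" using w c2[of u w] c2[of v w] ne by auto
  qed
  have disj: "?A \<inter> ?B = {}" proof -
    have "\<And>w. {v,w} = {w,v}" by blast
    then show ?thesis using nc by auto
  qed
  have "card (?A \<union> ?B) = card ?A + card ?B"
    using disj fin by (intro card_Un_disjoint) auto
  moreover have "card (?A \<union> ?B) \<le> card (V - {u,v})" using sub fin by (intro card_mono) auto
  moreover have "card (V - {u,v}) = card V - 2" using u v uv fin by (simp add: card_Diff_subset)
  moreover have "card V \<ge> 2"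
  proof -
    have "{u,v} \<subseteq> V" using u v by auto
    then have "card {u,v} \<le> card V" using fin by (intro card_mono) auto
    then show ?thesis using uv by simp
  qed
  moreover have "degree E u \<le> card ?A" using deg_le_nbr[OF g u] .
  moreover have "degree E v \<le> card ?B" using deg_le_nbr[OF g v] .
  moreover have "2 * int (degree E u) \<ge> int (card V) - 1" "2 * int (degree E v) \<ge> int (card V) - 1"
    using d u v by auto
  ultimately show False by linarith
qed

lemma all_rainbow:
  assumes g: "simple_graph V E"
    and d: "\<forall>v\<in>V. 2 * int (degree E v) \<ge> int (card V) - 1"
    and pc: "proper_edge_colouring E c"
  shows "rainbow_connected V E c"
  unfolding rainbow_connected_def
proof (intro ballI impI)
  fix u v assume u: "u \<in> V" and v: "v \<in> V" and uv: "u \<noteq> v"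
  have c2: "\<And>x y. {x,y} \<in> E \<Longrightarrow> x \<noteq> y"
    using g unfolding simple_graph_def by fastforce
  show "\<exists>xs. rainbow_path E c xs \<and> hd xs = u \<and> last xs = v"
  proof (cases "{u,v} \<in> E")
    case True
    have "rainbow_path E c [u,v]"
      unfolding rainbow_path_def is_path_def path_edges_def
    proof (intro conjI allI impI)
      show "distinct [u,v]" using uv by simp
      fix i assume "Suc i < length [u,v]"
      then have "i = 0" by auto
      then show "{[u,v] ! i, [u,v] ! Suc i} \<in> E" using True by auto
    qed simp_all
    then show ?thesis by force
  next
    case False
    then obtain w where w: "{u,w} \<in> E" "{w,v} \<in> E"
      using common_nbr[OF g d u v uv] by blast
    have wu: "w \<noteq> u" using c2 w(1) by blast
    have wv: "w \<noteq> v" using c2 w(2) by blast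
    have neq: "{u,w} \<noteq> {w,v}" using uv wu wv by (auto simp: doubleton_eq_iff)
    have int: "{u,w} \<inter> {w,v} \<noteq> {}" by blast
    have "c {u,w} \<noteq> c {w,v}" using pc w neq int unfolding proper_edge_colouring_def by metis
    moreover have "path_edges [u,w,v] = [{u,w},{w,v}]"
      unfolding path_edges_def by (simp add: upt_rec)
    moreover have "is_path E [u,w,v]"
      unfolding is_path_def
    proof (intro conjI allI impI)
      show "distinct [u,w,v]" using uv wu wv by simp
      fix i assume "Suc i < length [u,w,v]"
      then have "i = 0 \<or> i = 1" by auto
      then show "{[u,w,v] ! i, [u,w,v] ! Suc i} \<in> E" using w by auto
    qed simp
    ultimately have "rainbow_path E c [u,w,v]" unfolding rainbow_path_def by simp
    then show ?thesis by force
  qed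
qed

theorem proposition5p8:
  fixes V :: "'a set" and E :: "'a set set"
  assumes "simple_graph V E"
    and "\<forall>v\<in>V. 2 * int (degree E v) \<ge> int (card V) - 1"
  shows "prc V E = chromatic_index E"
proof -
  have "\<And>k. (\<exists>c. proper_edge_colouring E c \<and> rainbow_connected V E c \<and> card (c ` E) = k)
     \<longleftrightarrow> (\<exists>c. proper_edge_colouring E c \<and> card (c ` E) = k)"
    using all_rainbow[OF assms] by blast
  then show ?thesis unfolding prc_def chromatic_index_def by simp
qed

end
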